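(* Let $S$ and $T$ be left inverse semi-braces, $\sigma:T\to\mathrm{Aut}(S)$ a homomorphism from $(T,\cdot)$ into the automorphism group of the left inverse semi-brace $S$ (write ${}^ua=\sigma(u)(a)$), and $\delta:S\to\mathrm{End}(T)$ an anti-homomorphism from $(S,+)$ into the endomorphism semigroup of $(T,+)$ (write $u^a=\delta(a)(u)$). Suppose that $$(uv)^{\lambda_a({}^ub)}+u\left((u^{-1})^b+w\right)=u\left(v^b+w\right)$$ for all $a,b\in S$ and $u,v,w\in T$. Then $S\times T$ with $$(a,u)+(b,v)=(a+b,\,u^b+v),\qquad (a,u)(b,v)=(a\,{}^ub,\,uv)$$ for all $(a,u),(b,v)\in S\times T$ is a left inverse semi-brace (the double semidirect product of $S$ and $T$ via $\sigma$ and $\delta$).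
   Context: An inverse semigroup is a semigroup $(S,\cdot)$ in which for each $a$ there is a unique $a^{-1}$ with $aa^{-1}a=a$, $a^{-1}aa^{-1}=a^{-1}$. A left inverse semi-brace is a triple $(S,+,\cdot)$ with $(S,+)$ a semigroup, $(S,\cdot)$ an inverse semigroup and $a(b+c)=ab+a(a^{-1}+c)$ for all $a,b,c$; set $\lambda_a(b)=a(a^{-1}+b)$. An automorphism of the left inverse semi-brace $S$ is a bijection preserving both operations. That $\delta$ is an anti-homomorphism from $(S,+)$ means $\delta(a+b)=\delta(b)\circ\delta(a)$, i.e. $u^{a+b}=(u^a)^b$. *)

theory Defs
  imports Main
begin

text \<open>Structures are carried by whole types: a left inverse semi-brace on type 'a
  is given by its two operations add and mul.\<close>

definition is_semigroup :: "('a \<Rightarrow> 'a \<Rightarrow> 'a) \<Rightarrow> bool" where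
  "is_semigroup f \<longleftrightarrow> (\<forall>a b c. f (f a b) c = f a (f b c))"

definition is_inverse_semigroup :: "('a \<Rightarrow> 'a \<Rightarrow> 'a) \<Rightarrow> bool" where
  "is_inverse_semigroup m \<longleftrightarrow> is_semigroup m \<and>
     (\<forall>a. \<exists>!b. m (m a b) a = a \<and> m (m b a) b = b)"

definition inv_of :: "('a \<Rightarrow> 'a \<Rightarrow> 'a) \<Rightarrow> 'a \<Rightarrow> 'a" where
  "inv_of m a = (THE b. m (m a b) a = a \<and> m (m b a) b = b)"

definition left_inverse_semibrace :: "('a \<Rightarrow> 'a \<Rightarrow> 'a) \<Rightarrow> ('a \<Rightarrow> 'a \<Rightarrow> 'a) \<Rightarrow> bool" where
  "left_inverse_semibrace add mul \<longleftrightarrow> is_semigroup add \<and> is_inverse_semigroup mul \<and>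
     (\<forall>a b c. mul a (add b c) = add (mul a b) (mul a (add (inv_of mul a) c)))"

definition lam :: "('a \<Rightarrow> 'a \<Rightarrow> 'a) \<Rightarrow> ('a \<Rightarrow> 'a \<Rightarrow> 'a) \<Rightarrow> 'a \<Rightarrow> 'a \<Rightarrow> 'a" where
  "lam add mul a b = mul a (add (inv_of mul a) b)"

definition is_sb_automorphism ::
  "('a \<Rightarrow> 'a \<Rightarrow> 'a) \<Rightarrow> ('a \<Rightarrow> 'a \<Rightarrow> 'a) \<Rightarrow> ('a \<Rightarrow> 'a) \<Rightarrow> bool" where
  "is_sb_automorphism add mul f \<longleftrightarrow> bij f \<and>
     (\<forall>a b. f (add a b) = add (f a) (f b)) \<and> (\<forall>a b. f (mul a b) = mul (f a) (f b))"

definition is_endomorphism :: "('a \<Rightarrow> 'a \<Rightarrow> 'a) \<Rightarrow> ('a \<Rightarrow> 'a) \<Rightarrow> bool" where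
  "is_endomorphism add f \<longleftrightarrow> (\<forall>a b. f (add a b) = add (f a) (f b))"

end

theory Submission
  imports Defs
begin

lemma inv_props:
  assumes "is_inverse_semigroup m"
  shows "m (m a (inv_of m a)) a = a \<and> m (m (inv_of m a) a) (inv_of m a) = inv_of m a"
proof -
  from assms have "\<exists>!b. m (m a b) a = a \<and> m (m b a) b = b"
    unfolding is_inverse_semigroup_def by blast
  then show ?thesis unfolding inv_of_def by (rule theI')
qed

lemma inv_unique:
  assumes "is_inverse_semigroup m" "m (m a b) a = a" "m (m b a) b = b"
  shows "inv_of m a = b"
proof -
  from assms(1) have "\<exists>!b. m (m a b) a = a \<and> m (m b a) b = b"
    unfolding is_inverse_semigroup_def by blast
  then show ?thesis unfolding inv_of_def by (rule the1_equality) (simp add: assms(2,3))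
qed

lemma idem_bij_id:
  assumes "bij f" "f \<circ> f = f"
  shows "f = id"
proof
  fix x
  have "f (f x) = f x" using assms(2) by (metis comp_apply)
  then show "f x = id x" using assms(1) by (simp add: bij_def inj_eq)
qed

theorem theorem38:
  fixes addS mulS :: "'a \<Rightarrow> 'a \<Rightarrow> 'a"
    and addT mulT :: "'b \<Rightarrow> 'b \<Rightarrow> 'b"
    and \<sigma> :: "'b \<Rightarrow> 'a \<Rightarrow> 'a"
    and \<delta> :: "'a \<Rightarrow> 'b \<Rightarrow> 'b"
  assumes S: "left_inverse_semibrace addS mulS"
    and T: "left_inverse_semibrace addT mulT"
    and \<sigma>_aut: "\<forall>u. is_sb_automorphism addS mulS (\<sigma> u)"
    and \<sigma>_hom: "\<forall>u v. \<sigma> (mulT u v) = \<sigma> u \<circ> \<sigma> v"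
    and \<delta>_end: "\<forall>a. is_endomorphism addT (\<delta> a)"
    and \<delta>_anti: "\<forall>a b. \<delta> (addS a b) = \<delta> b \<circ> \<delta> a"
    and compat: "\<forall>a b u v w.
       addT (\<delta> (lam addS mulS a (\<sigma> u b)) (mulT u v))
            (mulT u (addT (\<delta> b (inv_of mulT u)) w))
       = mulT u (addT (\<delta> b v) w)"
  shows "left_inverse_semibrace
           (\<lambda>(a, u) (b, v). (addS a b, addT (\<delta> b u) v))
           (\<lambda>(a, u) (b, v). (mulS a (\<sigma> u b), mulT u v))"
proof -
  define A where "A = (\<lambda>(a, u) (b, v). (addS a b, addT (\<delta> b u) v))"
  define M where "M = (\<lambda>(a::'a, u::'b) (b, v). (mulS a (\<sigma> u b), mulT u v))"
  have SaA: "\<And>a b c. addS (addS a b) c = addS a (addS b c)"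
    using S unfolding left_inverse_semibrace_def is_semigroup_def by blast
  have TaA: "\<And>a b c. addT (addT a b) c = addT a (addT b c)"
    using T unfolding left_inverse_semibrace_def is_semigroup_def by blast
  have SI: "is_inverse_semigroup mulS" using S unfolding left_inverse_semibrace_def by blast
  have TI: "is_inverse_semigroup mulT" using T unfolding left_inverse_semibrace_def by blast
  have SmA: "\<And>a b c. mulS (mulS a b) c = mulS a (mulS b c)"
    using SI unfolding is_inverse_semigroup_def is_semigroup_def by blast
  have TmA: "\<And>a b c. mulT (mulT a b) c = mulT a (mulT b c)"
    using TI unfolding is_inverse_semigroup_def is_semigroup_def by blast
  have Sbr: "\<And>a b c. mulS a (addS b c) = addS (mulS a b) (mulS a (addS (inv_of mulS a) c))"
    using S unfolding left_inverse_semibrace_def by blast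
  have sadd: "\<And>u a b. \<sigma> u (addS a b) = addS (\<sigma> u a) (\<sigma> u b)"
    using \<sigma>_aut unfolding is_sb_automorphism_def by blast
  have smul: "\<And>u a b. \<sigma> u (mulS a b) = mulS (\<sigma> u a) (\<sigma> u b)"
    using \<sigma>_aut unfolding is_sb_automorphism_def by blast
  have sbij: "\<And>u. bij (\<sigma> u)"
    using \<sigma>_aut unfolding is_sb_automorphism_def by blast
  have shom: "\<And>u v x. \<sigma> (mulT u v) x = \<sigma> u (\<sigma> v x)"
    using \<sigma>_hom by simp
  have dend: "\<And>a u v. \<delta> a (addT u v) = addT (\<delta> a u) (\<delta> a v)"
    using \<delta>_end unfolding is_endomorphism_def by blast
  have danti: "\<And>a b u. \<delta> (addS a b) u = \<delta> b (\<delta> a u)"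
    using \<delta>_anti by simp
  define iS where "iS = inv_of mulS"
  define iT where "iT = inv_of mulT"
  have iS1: "\<And>a. mulS (mulS a (iS a)) a = a" and iS2: "\<And>a. mulS (mulS (iS a) a) (iS a) = iS a"
    using inv_props[OF SI] unfolding iS_def by auto
  have iT1: "\<And>a. mulT (mulT a (iT a)) a = a" and iT2: "\<And>a. mulT (mulT (iT a) a) (iT a) = iT a"
    using inv_props[OF TI] unfolding iT_def by auto
  have sid1: "\<And>u x. \<sigma> (mulT u (iT u)) x = x"
  proof -
    fix u x
    have "\<sigma> (mulT u (iT u)) \<circ> \<sigma> (mulT u (iT u)) = \<sigma> (mulT u (iT u))"
      using \<sigma>_hom iT1 TmA by metis
    then have "\<sigma> (mulT u (iT u)) = id" using idem_bij_id sbij by blast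
    then show "\<sigma> (mulT u (iT u)) x = x" by simp
  qed
  have sid2: "\<And>u x. \<sigma> (mulT (iT u) u) x = x"
  proof -
    fix u x
    have "\<sigma> (mulT (iT u) u) \<circ> \<sigma> (mulT (iT u) u) = \<sigma> (mulT (iT u) u)"
      using \<sigma>_hom iT2 TmA by metis
    then have "\<sigma> (mulT (iT u) u) = id" using idem_bij_id sbij by blast
    then show "\<sigma> (mulT (iT u) u) x = x" by simp
  qed
  have s12: "\<And>u x. \<sigma> u (\<sigma> (iT u) x) = x" using sid1 shom by metis
  have s21: "\<And>u x. \<sigma> (iT u) (\<sigma> u x) = x" using sid2 shom by metis
  have Ms: "\<And>a u b v. M (a,u) (b,v) = (mulS a (\<sigma> u b), mulT u v)" unfolding M_def by simp
  have As: "\<And>a u b v. A (a,u) (b,v) = (addS a b, addT (\<delta> b u) v)" unfolding A_def by simp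
  have Asg: "is_semigroup A"
    unfolding is_semigroup_def
  proof (intro allI)
    fix p q r :: "'a \<times> 'b"
    obtain a u where p: "p = (a,u)" by fastforce
    obtain b v where q: "q = (b,v)" by fastforce
    obtain c w where r: "r = (c,w)" by fastforce
    show "A (A p q) r = A p (A q r)" unfolding p q r As
      by (simp add: SaA TaA dend danti)
  qed
  have Msg: "is_semigroup M"
    unfolding is_semigroup_def
  proof (intro allI)
    fix p q r :: "'a \<times> 'b"
    obtain a u where p: "p = (a,u)" by fastforce
    obtain b v where q: "q = (b,v)" by fastforce
    obtain c w where r: "r = (c,w)" by fastforce
    show "M (M p q) r = M p (M q r)" unfolding p q r Ms
      by (simp add: SmA TmA smul shom)
  qed
  have invP: "\<And>a u x y. M (M (a,u) (x,y)) (a,u) = (a,u) \<and> M (M (x,y) (a,u)) (x,y) = (x,y)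
      \<longleftrightarrow> x = \<sigma> (iT u) (iS a) \<and> y = iT u"
  proof
    fix a u x y
    assume "M (M (a,u) (x,y)) (a,u) = (a,u) \<and> M (M (x,y) (a,u)) (x,y) = (x,y)"
    then have h1: "mulS (mulS a (\<sigma> u x)) (\<sigma> (mulT u y) a) = a" "mulT (mulT u y) u = u"
      and h2: "mulS (mulS x (\<sigma> y a)) (\<sigma> (mulT y u) x) = x" "mulT (mulT y u) y = y"
      unfolding Ms by auto
    have y: "y = iT u" using inv_unique[OF TI h1(2) h2(2)] unfolding iT_def by simp
    have e1: "mulS (mulS a (\<sigma> u x)) a = a" using h1(1) sid1 y by simp
    have e2: "mulS (mulS x (\<sigma> (iT u) a)) x = x" using h2(1) sid2 y by simp
    have "\<sigma> u (mulS (mulS x (\<sigma> (iT u) a)) x) = \<sigma> u x" using e2 by simp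
    then have e3: "mulS (mulS (\<sigma> u x) a) (\<sigma> u x) = \<sigma> u x" by (simp add: smul s12)
    have "iS a = \<sigma> u x" using inv_unique[OF SI e1 e3] unfolding iS_def by simp
    then have "x = \<sigma> (iT u) (iS a)" using s21 by simp
    then show "x = \<sigma> (iT u) (iS a) \<and> y = iT u" using y by simp
  next
    fix a u x y
    assume h: "x = \<sigma> (iT u) (iS a) \<and> y = iT u"
    have "mulS (mulS x (\<sigma> (iT u) a)) x = \<sigma> (iT u) (mulS (mulS (iS a) a) (iS a))"
      using h by (simp add: smul)
    also have "\<dots> = x" using h iS2 by simp
    finally have "mulS (mulS x (\<sigma> (iT u) a)) x = x" .
    then show "M (M (a,u) (x,y)) (a,u) = (a,u) \<and> M (M (x,y) (a,u)) (x,y) = (x,y)"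
      using h unfolding Ms by (simp add: sid1 sid2 s12 iS1 iT1 iT2)
  qed
  have Minv: "is_inverse_semigroup M"
    unfolding is_inverse_semigroup_def
  proof (intro conjI Msg allI)
    fix p :: "'a \<times> 'b"
    obtain a u where p: "p = (a,u)" by fastforce
    show "\<exists>!q. M (M p q) p = p \<and> M (M q p) q = q"
    proof (rule ex1I[of _ "(\<sigma> (iT u) (iS a), iT u)"])
      show "M (M p (\<sigma> (iT u) (iS a), iT u)) p = p \<and> M (M (\<sigma> (iT u) (iS a), iT u) p) (\<sigma> (iT u) (iS a), iT u) = (\<sigma> (iT u) (iS a), iT u)"
        unfolding p using invP by blast
    next
      fix q assume "M (M p q) p = p \<and> M (M q p) q = q"
      moreover obtain x y where "q = (x,y)" by fastforce
      ultimately show "q = (\<sigma> (iT u) (iS a), iT u)" unfolding p using invP by blast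
    qed
  qed
  have iM: "\<And>a u. inv_of M (a,u) = (\<sigma> (iT u) (iS a), iT u)"
    using inv_unique[OF Minv] invP by blast
  have br: "\<And>p q r. M p (A q r) = A (M p q) (M p (A (inv_of M p) r))"
  proof -
    fix p q r :: "'a \<times> 'b"
    obtain a u where p: "p = (a,u)" by fastforce
    obtain b v where q: "q = (b,v)" by fastforce
    obtain c w where r: "r = (c,w)" by fastforce
    have c1: "\<sigma> u (addS (\<sigma> (iT u) (iS a)) c) = addS (iS a) (\<sigma> u c)"
      by (simp add: sadd s12)
    have l: "lam addS mulS a (\<sigma> u c) = mulS a (addS (iS a) (\<sigma> u c))"
      unfolding lam_def iS_def by simp
    have cp: "addT (\<delta> (mulS a (addS (iS a) (\<sigma> u c))) (mulT u v)) (mulT u (addT (\<delta> c (iT u)) w))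
       = mulT u (addT (\<delta> c v) w)"
      using compat l unfolding iT_def by metis
    show "M p (A q r) = A (M p q) (M p (A (inv_of M p) r))"
      unfolding p q r iM As Ms c1 using cp Sbr[of a "\<sigma> u b" "\<sigma> u c"]
      by (simp add: sadd iS_def)
  qed
  show ?thesis
    unfolding left_inverse_semibrace_def A_def[symmetric] M_def[symmetric]
    using Asg Minv br by blast
qed

end
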